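(* (1) Invariance: if $t\to_w u$ then $t\equiv_S u$. (2) Compatibility: if $t\equiv_S u$ then $C\langle t\rangle\equiv_S C\langle u\rangle$ for every context $C$.
   Context: Terms: $t ::= x \mid \lambda x.t \mid t\,u \mid t[x\backslash u]$ ($t[x\backslash u]$ an explicit substitution binding $x$ in $t$; terms up to $\alpha$). Values $v ::= \lambda x.t$. Substitution contexts $S ::= \langle\cdot\rangle\mid S[x\backslash u]$. Weak contexts $W ::= \langle\cdot\rangle \mid W\,t \mid t\,W \mid t[x\backslash W] \mid W[x\backslash u]$; $W\langle\langle t\rangle\rangle$ is plugging without capture of free variables of $t$. Root rules: $S\langle\lambda x.t\rangle u\mapsto_m S\langle t[x\backslash u]\rangle$; $W\langle\langle x\rangle\rangle[x\backslash u]\mapsto_e W\langle\langle u\rangle\rangle[x\backslash u]$; $t[x\backslash S\langle v\rangle]\mapsto_{gcv} S\langle t\rangle$ if $x\notin\mathrm{fv}(t)$. $\to_w$ is the union of their closures under weak contexts. A context $C$ is a term with exactly one hole anywhere. Contextual equivalence $\equiv_S$: $t\equiv_S u$ iff for every context $C$ such that $C\langle t\rangle$ and $C\langle u\rangle$ are closed, $C\langle t\rangle$ is weakly $\to_w$-normalizing iff $C\langle u\rangle$ is. *)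

theory Defs
  imports Main
begin

text \<open>Terms up to alpha-equivalence, represented with de Bruijn indices.
  ES t u is the explicit substitution t[x\u], where x is index 0 bound in t.\<close>

datatype trm = Var nat | Lam trm | App trm trm | ES trm trm

fun ext :: "(nat \<Rightarrow> nat) \<Rightarrow> nat \<Rightarrow> nat" where
  "ext f 0 = 0"
| "ext f (Suc n) = Suc (f n)"

fun ren :: "(nat \<Rightarrow> nat) \<Rightarrow> trm \<Rightarrow> trm" where
  "ren f (Var n) = Var (f n)"
| "ren f (Lam t) = Lam (ren (ext f) t)"
| "ren f (App t u) = App (ren f t) (ren f u)"
| "ren f (ES t u) = ES (ren (ext f) t) (ren f u)"

definition lift :: "nat \<Rightarrow> trm \<Rightarrow> trm" where
  "lift k t = ren (\<lambda>n. n + k) t"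

fun fv :: "trm \<Rightarrow> nat set" where
  "fv (Var n) = {n}"
| "fv (Lam t) = {n. Suc n \<in> fv t}"
| "fv (App t u) = fv t \<union> fv u"
| "fv (ES t u) = {n. Suc n \<in> fv t} \<union> fv u"

definition closed :: "trm \<Rightarrow> bool" where
  "closed t \<longleftrightarrow> fv t = {}"

text \<open>Substitution contexts: list [u1,...,uk] stands for <.>[..\uk]...[..\u1]
  with u1 outermost; the hole lies under (length S) binders.\<close>
fun plugS :: "trm list \<Rightarrow> trm \<Rightarrow> trm" where
  "plugS [] t = t"
| "plugS (u # S) t = ES (plugS S t) u"

datatype wctx = WHole | WAppL wctx trm | WAppR trm wctx | WESR trm wctx | WESL wctx trm

fun plugW :: "wctx \<Rightarrow> trm \<Rightarrow> trm" where
  "plugW WHole t = t"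
| "plugW (WAppL W u) t = App (plugW W t) u"
| "plugW (WAppR u W) t = App u (plugW W t)"
| "plugW (WESR u W) t = ES u (plugW W t)"
| "plugW (WESL W u) t = ES (plugW W t) u"

fun bW :: "wctx \<Rightarrow> nat" where
  "bW WHole = 0"
| "bW (WAppL W u) = bW W"
| "bW (WAppR u W) = bW W"
| "bW (WESR u W) = bW W"
| "bW (WESL W u) = Suc (bW W)"

inductive root :: "trm \<Rightarrow> trm \<Rightarrow> bool" where
  rm: "root (App (plugS S (Lam t)) u) (plugS S (ES t (lift (length S) u)))"
| re: "root (ES (plugW W (Var (bW W))) u) (ES (plugW W (lift (Suc (bW W)) u)) u)"
| rgcv: "0 \<notin> fv t \<Longrightarrow>
    root (ES t (plugS S (Lam s))) (plugS S (ren (\<lambda>n. n - 1 + length S) t))"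

definition wstep :: "trm \<Rightarrow> trm \<Rightarrow> bool" where
  "wstep t u \<longleftrightarrow> (\<exists>W t0 u0. t = plugW W t0 \<and> u = plugW W u0 \<and> root t0 u0)"

definition wnorm :: "trm \<Rightarrow> bool" where
  "wnorm t \<longleftrightarrow> (\<exists>u. wstep\<^sup>*\<^sup>* t u \<and> \<not> (\<exists>u'. wstep u u'))"

text \<open>General contexts (one hole anywhere); plugging may capture.\<close>
datatype ctx = Hole | CLam ctx | CAppL ctx trm | CAppR trm ctx | CESL ctx trm | CESR trm ctx

fun plugC :: "ctx \<Rightarrow> trm \<Rightarrow> trm" where
  "plugC Hole t = t"
| "plugC (CLam C) t = Lam (plugC C t)"
| "plugC (CAppL C u) t = App (plugC C t) u"
| "plugC (CAppR u C) t = App u (plugC C t)"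
| "plugC (CESL C u) t = ES (plugC C t) u"
| "plugC (CESR u C) t = ES u (plugC C t)"

definition ctxeq :: "trm \<Rightarrow> trm \<Rightarrow> bool" where
  "ctxeq t u \<longleftrightarrow> (\<forall>C. closed (plugC C t) \<and> closed (plugC C u) \<longrightarrow>
                       (wnorm (plugC C t) \<longleftrightarrow> wnorm (plugC C u)))"

end

theory Submission
  imports Defs "HOL-Library.Multiset" "HOL-Library.Function_Algebras"
begin


datatype ty = Star | Arr "ty multiset" ty

type_synonym env = "nat \<Rightarrow> ty multiset"

definition senv :: "nat \<Rightarrow> ty multiset \<Rightarrow> env" where
  "senv k M = (\<lambda>i. if i = k then M else {#})"

definition etl :: "env \<Rightarrow> env" where
  "etl G = (\<lambda>i. G (Suc i))"

definition edrop :: "nat \<Rightarrow> env \<Rightarrow> env" where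
  "edrop k G = (\<lambda>i. G (i + k))"

inductive tj :: "env \<Rightarrow> trm \<Rightarrow> ty \<Rightarrow> nat \<Rightarrow> bool"
  and tjm :: "env \<Rightarrow> trm \<Rightarrow> ty multiset \<Rightarrow> nat \<Rightarrow> bool" where
  tVar: "tj (senv k {#s#}) (Var k) s 1"
| tStar: "tj 0 (Lam t) Star 1"
| tLam: "tj G t s n \<Longrightarrow> tj (etl G) (Lam t) (Arr (G 0) s) (Suc n)"
| tApp: "tj G t (Arr M s) n1 \<Longrightarrow> tjm D u (add_mset Star M) n2 \<Longrightarrow> tj (G + D) (App t u) s (Suc (n1 + n2))"
| tES: "tj G t s n1 \<Longrightarrow> tjm D u (add_mset Star (G 0)) n2 \<Longrightarrow> tj (etl G + D) (ES t u) s (Suc (n1 + n2))"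
| tmNil: "tjm 0 u {#} 0"
| tmCons: "tj G u s n \<Longrightarrow> tjm D u M m \<Longrightarrow> tjm (G + D) u (add_mset s M) (n + m)"

inductive_cases tjVarE: "tj G (Var k) s n"
inductive_cases tjLamE: "tj G (Lam t) s n"
inductive_cases tjAppE: "tj G (App t u) s n"
inductive_cases tjESE: "tj G (ES t u) s n"
inductive_cases tjmNilE: "tjm G u {#} n"



lemma tjm_induct[consumes 1, case_names Nil Cons]:
  assumes "tjm G u M n"
    and "\<And>u. Q 0 u {#} 0"
    and "\<And>G u s n D M m. tj G u s n \<Longrightarrow> tjm D u M m \<Longrightarrow> Q D u M m \<Longrightarrow> Q (G+D) u (add_mset s M) (n+m)"
  shows "Q G u M n"
  using assms by (induction rule: tj_tjm.inducts(2)[of _ _ _ _ "\<lambda>_ _ _ _. True"]) auto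

lemma plus_fun_eta[simp]: "(\<lambda>a. F a + H a) = F + (H :: nat \<Rightarrow> ty multiset)"
  by (simp add: plus_fun_def)

lemma tVar': "tj (senv k {#s#}) (Var k) s (Suc 0)"
  using tVar by simp

lemma tj_Lam_iff: "tj G (Lam t) s n \<longleftrightarrow> (G = 0 \<and> s = Star \<and> n = 1) \<or>
   (\<exists>Gb s' n'. tj Gb t s' n' \<and> G = etl Gb \<and> s = Arr (Gb 0) s' \<and> n = Suc n')"
  by (auto elim: tjLamE intro: tj_tjm.intros tStar[simplified])

lemma tj_App_iff: "tj G (App t u) s n \<longleftrightarrow>
   (\<exists>G1 M n1 D n2. tj G1 t (Arr M s) n1 \<and> tjm D u (add_mset Star M) n2 \<and> G = G1 + D \<and> n = Suc (n1 + n2))"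
  apply (rule iffI)
   apply (erule tjAppE, blast)
  apply (auto intro: tj_tjm.intros)
  done

lemma tj_ES_iff: "tj G (ES t u) s n \<longleftrightarrow>
   (\<exists>Gb n1 D n2. tj Gb t s n1 \<and> tjm D u (add_mset Star (Gb 0)) n2 \<and> G = etl Gb + D \<and> n = Suc (n1 + n2))"
  apply (rule iffI)
   apply (erule tjESE, blast)
  apply (auto intro: tj_tjm.intros)
  done

lemma etl_add[simp]: "etl (G + D) = etl G + etl D" by (auto simp: etl_def)
lemma etl_0[simp]: "etl 0 = 0" by (auto simp: etl_def)
lemma edrop_add[simp]: "edrop k (G + D) = edrop k G + edrop k D" by (auto simp: edrop_def)
lemma edrop_0[simp]: "edrop k 0 = 0" by (auto simp: edrop_def)
lemma etl_apply[simp]: "etl G i = G (Suc i)" by (simp add: etl_def)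
lemma edrop_apply[simp]: "edrop k G i = G (i + k)" by (simp add: edrop_def)

lemma tjm_Nil_iff: "tjm G u {#} n \<longleftrightarrow> G = 0 \<and> n = 0"
proof
  assume "tjm G u {#} n" then show "G = 0 \<and> n = 0"
    by (rule tjmNilE) auto
qed (auto intro: tj_tjm.intros)

lemma tjm_mem:
  assumes "tjm G u N n" "s \<in># N"
  shows "\<exists>G1 G2 n1 n2. tj G1 u s n1 \<and> tjm G2 u (N - {#s#}) n2 \<and> G = G1 + G2 \<and> n = n1 + n2"
  using assms
proof (induction rule: tjm_induct)
  case (Nil u) then show ?case by simp
next
  case (Cons G u s' n D M m)
  show ?case
  proof (cases "s' = s")
    case True then show ?thesis using Cons by auto
  next
    case False
    then have "s \<in># M" using Cons by auto
    from Cons.IH[OF this] obtain G1 G2 n1 n2 where h: "tj G1 u s n1" "tjm G2 u (M - {#s#}) n2" "D = G1 + G2" "m = n1 + n2" by blast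
    have "tjm (G + G2) u (add_mset s' (M - {#s#})) (n + n2)" using Cons h by (auto intro: tj_tjm.intros)
    moreover have "add_mset s' (M - {#s#}) = add_mset s' M - {#s#}" using False by auto
    ultimately have "tjm (G + G2) u (add_mset s' M - {#s#}) (n + n2)" by simp
    moreover have "G + D = G1 + (G + G2)" "n + m = n1 + (n + n2)" using h by (simp_all add: ac_simps)
    ultimately show ?thesis using h(1) by blast
  qed
qed

lemma tjm_add_iff: "tjm G u (add_mset s M) n \<longleftrightarrow> (\<exists>G1 G2 n1 n2. tj G1 u s n1 \<and> tjm G2 u M n2 \<and> G = G1 + G2 \<and> n = n1 + n2)"
  using tjm_mem[of G u "add_mset s M" n s] by (auto intro: tj_tjm.intros)

lemma tjm_single_iff: "tjm G u {#s#} n \<longleftrightarrow> tj G u s n"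
  by (auto simp: tjm_add_iff tjm_Nil_iff)

lemma tjm_union_iff: "tjm G u (M1 + M2) n \<longleftrightarrow> (\<exists>G1 G2 n1 n2. tjm G1 u M1 n1 \<and> tjm G2 u M2 n2 \<and> G = G1 + G2 \<and> n = n1 + n2)"
proof (induction M1 arbitrary: G n)
  case empty then show ?case by (auto simp: tjm_Nil_iff)
next
  case (add s M1)
  show ?case
  proof
    assume "tjm G u (add_mset s M1 + M2) n"
    then obtain Ga Gb na nb where "tj Ga u s na" "tjm Gb u (M1 + M2) nb" "G = Ga + Gb" "n = na + nb"
      by (auto simp: tjm_add_iff)
    with add.IH obtain G1 G2 n1 n2 where "tjm G1 u M1 n1" "tjm G2 u M2 n2" "Gb = G1 + G2" "nb = n1 + n2" by blast
    moreover have "tjm (Ga + G1) u (add_mset s M1) (na + n1)"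
      using \<open>tj Ga u s na\<close> \<open>tjm G1 u M1 n1\<close> by (rule tmCons)
    moreover have "G = (Ga + G1) + G2" "n = (na + n1) + n2"
      using \<open>G = Ga + Gb\<close> \<open>n = na + nb\<close> \<open>Gb = G1 + G2\<close> \<open>nb = n1 + n2\<close> by (simp_all add: ac_simps)
    ultimately show "\<exists>G1 G2 n1 n2. tjm G1 u (add_mset s M1) n1 \<and> tjm G2 u M2 n2 \<and> G = G1 + G2 \<and> n = n1 + n2"
      by blast
  next
    assume "\<exists>G1 G2 n1 n2. tjm G1 u (add_mset s M1) n1 \<and> tjm G2 u M2 n2 \<and> G = G1 + G2 \<and> n = n1 + n2"
    then obtain G1 G2 n1 n2 where h: "tjm G1 u (add_mset s M1) n1" "tjm G2 u M2 n2" "G = G1 + G2" "n = n1 + n2" by blast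
    then obtain Ga Gb na nb where h2: "tj Ga u s na" "tjm Gb u M1 nb" "G1 = Ga + Gb" "n1 = na + nb" by (auto simp: tjm_add_iff)
    have "tjm (Gb + G2) u (M1 + M2) (nb + n2)" using add.IH h h2 by blast
    with h2(1) have "tjm (Ga + (Gb + G2)) u (add_mset s (M1 + M2)) (na + (nb + n2))" by (rule tmCons)
    moreover have "G = Ga + (Gb + G2)" "n = na + (nb + n2)" using h h2 by (simp_all add: ac_simps)
    ultimately show "tjm G u (add_mset s M1 + M2) n" by simp
  qed
qed

lemma senv_add: "senv k (M + N) = senv k M + senv k N" by (auto simp: senv_def)
lemma senv_empty[simp]: "senv k {#} = 0" by (auto simp: senv_def)

lemma tj_Var_iff: "tj G (Var k) s n \<longleftrightarrow> G = senv k {#s#} \<and> n = 1"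
  by (auto elim: tjVarE intro: tVar[simplified])

lemma tjm_Var_iff: "tjm G (Var k) M n \<longleftrightarrow> G = senv k M \<and> n = size M"
proof (induction M arbitrary: G n)
  case empty then show ?case by (auto simp: tjm_Nil_iff)
next
  case (add s M)
  have e: "senv k (add_mset s M) = senv k {#s#} + senv k M"
    using senv_add[of k "{#s#}" M] by simp
  show ?case by (auto simp: tjm_add_iff add.IH tj_Var_iff e)
qed

lemma tj_supp:
  "(tj G t s n \<longrightarrow> (\<forall>i. G i \<noteq> {#} \<longrightarrow> i \<in> fv t)) \<and> (tjm G' u M m \<longrightarrow> (\<forall>i. G' i \<noteq> {#} \<longrightarrow> i \<in> fv u))"
  by (induction rule: tj_tjm.induct) (auto simp: senv_def)

lemma tj_supp1: "tj G t s n \<Longrightarrow> i \<notin> fv t \<Longrightarrow> G i = {#}"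
  using tj_supp by blast
lemma tjm_supp1: "tjm G t M n \<Longrightarrow> i \<notin> fv t \<Longrightarrow> G i = {#}"
  using tj_supp by blast



lemma zero_fun_eta[simp]: "(\<lambda>a::nat. ({#}::ty multiset)) = 0"
  by (simp add: zero_fun_def)

lemma tStar': "tj 0 (Lam t) Star (Suc 0)"
  using tStar by simp

lemma ext_inj: assumes "inj f" shows "inj (ext f)"
proof (rule injI)
  fix x y assume "ext f x = ext f y"
  then show "x = y" using assms by (cases x; cases y) (auto dest: injD)
qed

lemma ext_comp: "ext (f \<circ> g) = ext f \<circ> ext g"
proof
  fix n show "ext (f \<circ> g) n = (ext f \<circ> ext g) n" by (cases n) auto
qed

lemma ext_id: "ext id = id"
proof
  fix n show "ext id n = id n" by (cases n) auto
qed

lemma ext_id': "ext (\<lambda>x. x) = (\<lambda>x. x)"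
  using ext_id by (simp add: id_def)

lemma ren_comp: "ren f (ren g t) = ren (f \<circ> g) t"
  by (induction t arbitrary: f g) (auto simp: ext_comp)

lemma ren_id': "ren (\<lambda>x. x) t = t"
  by (induction t) (auto simp: ext_id')

lemma ren_id: "ren id t = t"
  using ren_id' by (simp add: id_def)

lemma ren_cong: "(\<And>x. x \<in> fv t \<Longrightarrow> f x = g x) \<Longrightarrow> ren f t = ren g t"
proof (induction t arbitrary: f g)
  case (Var n) then show ?case by simp
next
  case (Lam t)
  have "\<And>x. x \<in> fv t \<Longrightarrow> ext f x = ext g x"
    using Lam.prems by (case_tac x) auto
  then have "ren (ext f) t = ren (ext g) t" by (rule Lam.IH)
  then show ?case by simp
next
  case (App t u)
  have "ren f t = ren g t" by (rule App.IH(1)) (simp add: App.prems)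
  moreover have "ren f u = ren g u" by (rule App.IH(2)) (simp add: App.prems)
  ultimately show ?case by simp
next
  case (ES t u)
  have "\<And>x. x \<in> fv t \<Longrightarrow> ext f x = ext g x"
    using ES.prems by (case_tac x) auto
  then have "ren (ext f) t = ren (ext g) t" by (rule ES.IH(1))
  moreover have "ren f u = ren g u" by (rule ES.IH(2)) (simp add: ES.prems)
  ultimately show ?case by simp
qed

lemma ext_eq_Suc: "ext f x = Suc n \<longleftrightarrow> (\<exists>m. x = Suc m \<and> f m = n)"
  by (cases x) auto

lemma Suc_ext_image: "{n. Suc n \<in> ext f ` A} = f ` {m. Suc m \<in> A}"
proof (intro set_eqI iffI)
  fix n assume "n \<in> {n. Suc n \<in> ext f ` A}"
  then obtain x where "x \<in> A" "Suc n = ext f x" by auto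
  then obtain m where "x = Suc m" "f m = n" using ext_eq_Suc[of f x n] by auto
  then show "n \<in> f ` {m. Suc m \<in> A}" using \<open>x \<in> A\<close> by auto
next
  fix n assume "n \<in> f ` {m. Suc m \<in> A}"
  then obtain m where "Suc m \<in> A" "n = f m" by auto
  then have "ext f (Suc m) \<in> ext f ` A" by blast
  then show "n \<in> {n. Suc n \<in> ext f ` A}" using \<open>n = f m\<close> by simp
qed

lemma fv_ren: "fv (ren f t) = f ` fv t"
proof (induction t arbitrary: f)
  case (Lam t)
  show ?case by (simp add: Lam.IH Suc_ext_image)
next
  case (ES t u)
  show ?case by (simp add: ES.IH Suc_ext_image image_Un)
qed (auto simp: image_Un)

lemma fv_lift: "fv (lift k t) = (\<lambda>n. n + k) ` fv t"
  by (simp add: lift_def fv_ren)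

definition renv :: "(nat \<Rightarrow> nat) \<Rightarrow> env \<Rightarrow> env" where
  "renv f G = (\<lambda>j. if j \<in> range f then G (inv f j) else {#})"

lemma renv_add[simp]: "renv f (G + D) = renv f G + renv f D"
  by (auto simp: renv_def)

lemma renv_0[simp]: "renv f 0 = 0"
  by (auto simp: renv_def)

lemma renv_app: "inj f \<Longrightarrow> renv f G (f i) = G i"
  by (auto simp: renv_def)

lemma renv_senv: assumes f: "inj f" shows "renv f (senv k M) = senv (f k) M"
proof (rule ext)
  fix j show "renv f (senv k M) j = senv (f k) M j"
  proof (cases "j \<in> range f")
    case True
    then obtain x where "j = f x" by auto
    then show ?thesis using f by (simp add: renv_app senv_def inj_eq)
  next
    case False then show ?thesis by (auto simp: renv_def senv_def)
  qed
qed

lemma renv_etl: "inj f \<Longrightarrow> etl (renv (ext f) G) = renv f (etl G)"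
proof
  fix j assume f: "inj f"
  have i: "inj (ext f)" using f by (rule ext_inj)
  show "etl (renv (ext f) G) j = renv f (etl G) j"
  proof (cases "j \<in> range f")
    case True
    then obtain i0 where j: "j = f i0" by auto
    then have e: "Suc j = ext f (Suc i0)" by simp
    have "etl (renv (ext f) G) j = renv (ext f) G (ext f (Suc i0))" by (simp add: e)
    also have "\<dots> = G (Suc i0)" using renv_app[OF i] .
    also have "\<dots> = renv f (etl G) (f i0)" using renv_app[OF f, of "etl G" i0] by simp
    finally show ?thesis using j by simp
  next
    case False
    have "Suc j \<notin> range (ext f)"
    proof
      assume "Suc j \<in> range (ext f)"
      then obtain x where "ext f x = Suc j" by (metis rangeE)
      then obtain m where "f m = j" by (auto simp: ext_eq_Suc)
      then show False using False by auto
    qed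
    then show ?thesis using False by (simp add: renv_def)
  qed
qed

lemma renv_ext0: "inj f \<Longrightarrow> renv (ext f) G 0 = G 0"
  using renv_app[OF ext_inj, of f G 0] by simp

lemma tj_ren:
  "(tj G t s n \<longrightarrow> (\<forall>f. inj f \<longrightarrow> tj (renv f G) (ren f t) s n))
   \<and> (tjm G' u M m \<longrightarrow> (\<forall>f. inj f \<longrightarrow> tjm (renv f G') (ren f u) M m))"
proof (induction rule: tj_tjm.induct)
  case (tVar k s) then show ?case by (auto simp: renv_senv intro: tVar')
next
  case (tStar t) then show ?case by (auto intro: tStar')
next
  case (tLam G t s n)
  show ?case
  proof (intro allI impI)
    fix f :: "nat \<Rightarrow> nat" assume f: "inj f"
    have "tj (renv (ext f) G) (ren (ext f) t) s n" using tLam f ext_inj by blast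
    from tj_tjm.tLam[OF this] show "tj (renv f (etl G)) (ren f (Lam t)) (Arr (G 0) s) (Suc n)"
      using f by (simp add: renv_etl renv_ext0)
  qed
next
  case (tApp G t M s n1 D u n2)
  show ?case
  proof (intro allI impI)
    fix f :: "nat \<Rightarrow> nat" assume f: "inj f"
    have a: "tj (renv f G) (ren f t) (Arr M s) n1" using tApp f by blast
    have b: "tjm (renv f D) (ren f u) (add_mset Star M) n2" using tApp f by blast
    from tj_tjm.tApp[OF a b] show "tj (renv f (G + D)) (ren f (App t u)) s (Suc (n1 + n2))" by simp
  qed
next
  case (tES G t s n1 D u n2)
  show ?case
  proof (intro allI impI)
    fix f :: "nat \<Rightarrow> nat" assume f: "inj f"
    have a: "tj (renv (ext f) G) (ren (ext f) t) s n1" using tES f ext_inj by blast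
    have b: "tjm (renv f D) (ren f u) (add_mset Star (renv (ext f) G 0)) n2" using tES f by (simp add: renv_ext0)
    from tj_tjm.tES[OF a b] show "tj (renv f (etl G + D)) (ren f (ES t u)) s (Suc (n1 + n2))"
      using f by (simp add: renv_etl)
  qed
next
  case (tmNil u) then show ?case by (simp add: tj_tjm.tmNil)
next
  case (tmCons G u s n D M m)
  show ?case
  proof (intro allI impI)
    fix f :: "nat \<Rightarrow> nat" assume f: "inj f"
    have a: "tj (renv f G) (ren f u) s n" using tmCons f by blast
    have b: "tjm (renv f D) (ren f u) M m" using tmCons f by blast
    from tj_tjm.tmCons[OF a b] show "tjm (renv f (G + D)) (ren f u) (add_mset s M) (n + m)" by simp
  qed
qed

lemma tj_ren1: "tj G t s n \<Longrightarrow> inj f \<Longrightarrow> tj (renv f G) (ren f t) s n"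
  using tj_ren by blast
lemma tjm_ren1: "tjm G t M n \<Longrightarrow> inj f \<Longrightarrow> tjm (renv f G) (ren f t) M n"
  using tj_ren by blast

lemma tjm_unren_gen:
  assumes "\<And>G s n. tj G (ren f t) s n \<Longrightarrow> \<exists>G0. tj G0 t s n \<and> G = renv f G0"
  shows "tjm G (ren f t) M n \<Longrightarrow> \<exists>G0. tjm G0 t M n \<and> G = renv f G0"
proof (induction M arbitrary: G n)
  case empty then show ?case by (auto simp: tjm_Nil_iff intro: tj_tjm.intros)
next
  case (add s M)
  then obtain G1 G2 n1 n2 where h: "tj G1 (ren f t) s n1" "tjm G2 (ren f t) M n2" "G = G1 + G2" "n = n1 + n2"
    by (auto simp: tjm_add_iff)
  from assms[OF h(1)] obtain A where "tj A t s n1" "G1 = renv f A" by blast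
  moreover from add.IH[OF h(2)] obtain B where "tjm B t M n2" "G2 = renv f B" by blast
  ultimately show ?case using h by (auto intro!: exI[of _ "A + B"] tmCons)
qed

lemma tj_unren:
  "\<forall>G s n f. tj G (ren f t) s n \<longrightarrow> inj f \<longrightarrow> (\<exists>G0. tj G0 t s n \<and> G = renv f G0)"
proof (induction t)
  case (Var k)
  show ?case
  proof (intro allI impI)
    fix G s n f assume "tj G (ren f (Var k)) s n" "inj f"
    then show "\<exists>G0. tj G0 (Var k) s n \<and> G = renv f G0"
      by (auto simp: tj_Var_iff renv_senv)
  qed
next
  case (Lam t)
  show ?case
  proof (intro allI impI)
    fix G s n f assume h: "tj G (ren f (Lam t)) s n" and f: "inj f"
    from h have "tj G (Lam (ren (ext f) t)) s n" by simp
    then consider "G = 0 \<and> s = Star \<and> n = 1" | Gb s' n' where "tj Gb (ren (ext f) t) s' n'" "G = etl Gb" "s = Arr (Gb 0) s'" "n = Suc n'"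
      unfolding tj_Lam_iff by blast
    then show "\<exists>G0. tj G0 (Lam t) s n \<and> G = renv f G0"
    proof cases
      case 1 then show ?thesis by (auto intro: tStar')
    next
      case (2 Gb s' n')
      from Lam.IH 2 f ext_inj obtain G0 where "tj G0 t s' n'" "Gb = renv (ext f) G0" by blast
      then show ?thesis using 2 f tj_tjm.tLam[of G0 t s' n']
        by (auto simp: renv_etl renv_ext0)
    qed
  qed
next
  case (App t u)
  show ?case
  proof (intro allI impI)
    fix G s n f assume h: "tj G (ren f (App t u)) s n" and f: "inj f"
    from h have "tj G (App (ren f t) (ren f u)) s n" by simp
    then obtain G1 M n1 D n2 where a: "G = G1 + D" "tj G1 (ren f t) (Arr M s) n1"
      "tjm D (ren f u) (add_mset Star M) n2" "n = Suc (n1 + n2)"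
      by (rule tjAppE) blast
    from App.IH(1) a(2) f obtain A where "tj A t (Arr M s) n1" "G1 = renv f A" by blast
    moreover from tjm_unren_gen[of f u, OF _ a(3)] App.IH(2) f obtain B where
      "tjm B u (add_mset Star M) n2" "D = renv f B" by blast
    ultimately show "\<exists>G0. tj G0 (App t u) s n \<and> G = renv f G0"
      using a by (auto intro!: exI[of _ "A + B"] tApp)
  qed
next
  case (ES t u)
  show ?case
  proof (intro allI impI)
    fix G s n f assume h: "tj G (ren f (ES t u)) s n" and f: "inj f"
    from h have "tj G (ES (ren (ext f) t) (ren f u)) s n" by simp
    then obtain Gb n1 D n2 where a: "G = etl Gb + D" "tj Gb (ren (ext f) t) s n1"
      "tjm D (ren f u) (add_mset Star (Gb 0)) n2" "n = Suc (n1 + n2)"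
      by (rule tjESE) blast
    from ES.IH(1) a(2) f ext_inj obtain A where A: "tj A t s n1" "Gb = renv (ext f) A" by blast
    then have "Gb 0 = A 0" using f by (simp add: renv_ext0)
    with tjm_unren_gen[of f u, OF _ a(3)] ES.IH(2) f obtain B where
      B: "tjm B u (add_mset Star (A 0)) n2" "D = renv f B" by auto
    have "tj (etl A + B) (ES t u) s n" using tES[OF A(1) B(1)] a(4) by simp
    moreover have "G = renv f (etl A + B)" using a A B f by (simp add: renv_etl)
    ultimately show "\<exists>G0. tj G0 (ES t u) s n \<and> G = renv f G0" by blast
  qed
qed

lemma tj_unren1: "tj G (ren f t) s n \<Longrightarrow> inj f \<Longrightarrow> \<exists>G0. tj G0 t s n \<and> G = renv f G0"
  using tj_unren by blast

lemma tjm_unren1: "tjm G (ren f t) M n \<Longrightarrow> inj f \<Longrightarrow> \<exists>G0. tjm G0 t M n \<and> G = renv f G0"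
  using tjm_unren_gen[of f t] tj_unren by blast



fun sW :: "trm list \<Rightarrow> wctx" where
  "sW [] = WHole"
| "sW (u # S) = WESL (sW S) u"

lemma plugS_sW: "plugS S t = plugW (sW S) t"
  by (induction S) auto

lemma bW_sW[simp]: "bW (sW S) = length S"
  by (induction S) auto

lemma edrop_0_id[simp]: "edrop 0 G = G" by (simp add: edrop_def)
lemma etl_edrop: "etl (edrop k G) = edrop (Suc k) G" by (auto simp: etl_def edrop_def)
lemma inj_shift: "inj (\<lambda>x::nat. x + k)" by (auto intro: injI)
lemma inj_Suc': "inj Suc" by (auto intro: injI)
lemma renv_shift_low: "i < k \<Longrightarrow> renv (\<lambda>x. x + k) D i = {#}"
  by (auto simp: renv_def)
lemma edrop_renv_shift: "edrop k (renv (\<lambda>x. x + k) D) = D"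
proof
  fix i show "edrop k (renv (\<lambda>x. x + k) D) i = D i"
    using renv_app[OF inj_shift, of k D i] by simp
qed
lemma etl_renv_Suc: "etl (renv Suc G) = G"
proof
  fix i show "etl (renv Suc G) i = G i" using renv_app[OF inj_Suc', of G i] by simp
qed
lemma renv_Suc_0: "renv Suc G 0 = {#}"
  by (auto simp: renv_def)
lemma etl_edrop_senv: "etl (edrop k (senv k M)) = 0"
  by (auto simp: senv_def)
lemma etl_edrop_renv: "etl (edrop k (renv (\<lambda>x. x + Suc k) D)) = D"
proof
  fix i show "etl (edrop k (renv (\<lambda>x. x + Suc k) D)) i = D i"
    using renv_app[OF inj_shift, of "Suc k" D i] by (simp add: add.commute)
qed

lemma spine_decomp:
  "tj G (plugS S b) s n \<Longrightarrow> \<exists>Gb nb Gs ns. tj Gb b s nb \<and> G = Gs + edrop (length S) Gb \<and> n = ns + nb \<and>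
   (\<forall>b' Gb' s' nb'. tj Gb' b' s' nb' \<longrightarrow> (\<forall>i<length S. Gb' i = Gb i) \<longrightarrow>
      tj (Gs + edrop (length S) Gb') (plugS S b') s' (ns + nb'))"
proof (induction S arbitrary: G s n)
  case Nil
  then show ?case by (rule_tac x=G in exI, rule_tac x=n in exI, rule_tac x=0 in exI, rule_tac x=0 in exI) simp
next
  case (Cons u S)
  from Cons.prems obtain G1 n1 D n2 where h: "tj G1 (plugS S b) s n1" "tjm D u (add_mset Star (G1 0)) n2"
    "G = etl G1 + D" "n = Suc (n1 + n2)"
    by (auto simp: tj_ES_iff)
  from Cons.IH[OF h(1)] obtain Gb nb Gs ns where ih: "tj Gb b s nb" "G1 = Gs + edrop (length S) Gb" "n1 = ns + nb"
    "\<forall>b' Gb' s' nb'. tj Gb' b' s' nb' \<longrightarrow> (\<forall>i<length S. Gb' i = Gb i) \<longrightarrow>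
      tj (Gs + edrop (length S) Gb') (plugS S b') s' (ns + nb')" by blast
  show ?case
  proof (intro exI conjI allI impI)
    show "tj Gb b s nb" by fact
    show "G = (etl Gs + D) + edrop (length (u # S)) Gb"
      using h ih by (simp add: etl_edrop ac_simps)
    show "n = Suc (ns + n2) + nb" using h ih by simp
  next
    fix b' Gb' s' nb' assume a: "tj Gb' b' s' nb'" "\<forall>i<length (u # S). Gb' i = Gb i"
    then have "\<forall>i<length S. Gb' i = Gb i" by simp
    with ih(4) a(1) have r: "tj (Gs + edrop (length S) Gb') (plugS S b') s' (ns + nb')" by blast
    have "(Gs + edrop (length S) Gb') 0 = G1 0" using a(2) ih(2) by simp
    with tES[OF r] h(2) have "tj (etl (Gs + edrop (length S) Gb') + D) (ES (plugS S b') u) s' (Suc (ns + nb' + n2))"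
      by simp
    then show "tj ((etl Gs + D) + edrop (length (u # S)) Gb') (plugS (u # S) b') s' (Suc (ns + n2) + nb')"
      by (simp add: etl_edrop ac_simps)
  qed
qed

definition okh :: "wctx \<Rightarrow> trm \<Rightarrow> bool" where
  "okh W t \<longleftrightarrow> (\<forall>i<bW W. i \<notin> fv t)"

definition decW :: "wctx \<Rightarrow> trm \<Rightarrow> env \<Rightarrow> ty \<Rightarrow> nat \<Rightarrow> bool" where
  "decW W t G s n \<longleftrightarrow> (\<exists>D M m G0 n0. tjm D t M m \<and> M \<noteq> {#} \<and> n = n0 + m \<and> G = G0 + edrop (bW W) D \<and>
     (\<forall>D' t' m'. tjm D' t' M m' \<longrightarrow> okh W t' \<longrightarrow> tj (G0 + edrop (bW W) D') (plugW W t') s (n0 + m')))"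

definition decWm :: "wctx \<Rightarrow> trm \<Rightarrow> env \<Rightarrow> ty multiset \<Rightarrow> nat \<Rightarrow> bool" where
  "decWm W t G N n \<longleftrightarrow> (\<exists>D M m G0 n0. tjm D t M m \<and> (N \<noteq> {#} \<longrightarrow> M \<noteq> {#}) \<and> n = n0 + m \<and> G = G0 + edrop (bW W) D \<and>
     (\<forall>D' t' m'. tjm D' t' M m' \<longrightarrow> okh W t' \<longrightarrow> tjm (G0 + edrop (bW W) D') (plugW W t') N (n0 + m')))"

lemma decWm_of_decW:
  assumes "\<And>G s n. tj G (plugW W t) s n \<Longrightarrow> decW W t G s n"
  shows "tjm G (plugW W t) N n \<Longrightarrow> decWm W t G N n"
proof (induction N arbitrary: G n)
  case empty
  then have "G = 0" "n = 0" by (auto simp: tjm_Nil_iff)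
  then show ?case unfolding decWm_def
    by (rule_tac x=0 in exI, rule_tac x="{#}" in exI, rule_tac x=0 in exI, rule_tac x=0 in exI, rule_tac x=0 in exI)
      (auto simp: tjm_Nil_iff intro: tmNil)
next
  case (add s N)
  then obtain G1 G2 n1 n2 where h: "tj G1 (plugW W t) s n1" "tjm G2 (plugW W t) N n2" "G = G1 + G2" "n = n1 + n2"
    by (auto simp: tjm_add_iff)
  from assms[OF h(1)] obtain D1 M1 m1 G01 n01 where d1: "tjm D1 t M1 m1" "M1 \<noteq> {#}" "n1 = n01 + m1"
    "G1 = G01 + edrop (bW W) D1"
    "\<forall>D' t' m'. tjm D' t' M1 m' \<longrightarrow> okh W t' \<longrightarrow> tj (G01 + edrop (bW W) D') (plugW W t') s (n01 + m')"
    unfolding decW_def by blast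
  from add.IH[OF h(2)] obtain D2 M2 m2 G02 n02 where d2: "tjm D2 t M2 m2" "n2 = n02 + m2"
    "G2 = G02 + edrop (bW W) D2"
    "\<forall>D' t' m'. tjm D' t' M2 m' \<longrightarrow> okh W t' \<longrightarrow> tjm (G02 + edrop (bW W) D') (plugW W t') N (n02 + m')"
    unfolding decWm_def by blast
  show ?case unfolding decWm_def
  proof (intro exI conjI allI impI)
    show "tjm (D1 + D2) t (M1 + M2) (m1 + m2)" using d1(1) d2(1) by (auto simp: tjm_union_iff)
    show "M1 + M2 \<noteq> {#}" using d1(2) by simp
    show "n = (n01 + n02) + (m1 + m2)" using h d1 d2 by simp
    show "G = (G01 + G02) + edrop (bW W) (D1 + D2)" using h d1 d2 by (simp add: ac_simps)
  next
    fix D' t' m' assume a: "tjm D' t' (M1 + M2) m'" "okh W t'"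
    then obtain D1' D2' m1' m2' where s: "tjm D1' t' M1 m1'" "tjm D2' t' M2 m2'" "D' = D1' + D2'" "m' = m1' + m2'"
      by (auto simp: tjm_union_iff)
    have r1: "tj (G01 + edrop (bW W) D1') (plugW W t') s (n01 + m1')" using d1(5) s(1) a(2) by blast
    have r2: "tjm (G02 + edrop (bW W) D2') (plugW W t') N (n02 + m2')" using d2(4) s(2) a(2) by blast
    from tmCons[OF r1 r2] show "tjm (G01 + G02 + edrop (bW W) D') (plugW W t') (add_mset s N) (n01 + n02 + m')"
      using s by (simp add: ac_simps)
  qed
qed

lemma decW_all: "okh W t \<Longrightarrow> tj G (plugW W t) s n \<Longrightarrow> decW W t G s n"
proof (induction W arbitrary: G s n)
  case WHole
  then show ?case unfolding decW_def
    by (rule_tac x=G in exI, rule_tac x="{#s#}" in exI, rule_tac x=n in exI, rule_tac x=0 in exI, rule_tac x=0 in exI)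
      (auto simp: tjm_single_iff)
next
  case (WAppL W u)
  from WAppL.prems obtain G1 M n1 D n2 where h: "tj G1 (plugW W t) (Arr M s) n1" "tjm D u (add_mset Star M) n2"
    "G = G1 + D" "n = Suc (n1 + n2)" by (auto simp: tj_App_iff)
  have ok: "okh W t" using WAppL.prems by (simp add: okh_def)
  from WAppL.IH[OF ok h(1)] obtain D0 M0 m G0 n0 where d: "tjm D0 t M0 m" "M0 \<noteq> {#}" "n1 = n0 + m"
    "G1 = G0 + edrop (bW W) D0"
    "\<forall>D' t' m'. tjm D' t' M0 m' \<longrightarrow> okh W t' \<longrightarrow> tj (G0 + edrop (bW W) D') (plugW W t') (Arr M s) (n0 + m')"
    unfolding decW_def by blast
  show ?case unfolding decW_def
  proof (intro exI conjI allI impI)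
    show "tjm D0 t M0 m" "M0 \<noteq> {#}" by fact+
    show "n = Suc (n0 + n2) + m" using h d by simp
    show "G = (G0 + D) + edrop (bW (WAppL W u)) D0" using h d by (simp add: ac_simps)
  next
    fix D' t' m' assume a: "tjm D' t' M0 m'" "okh (WAppL W u) t'"
    then have "okh W t'" by (simp add: okh_def)
    with d(5) a(1) have "tj (G0 + edrop (bW W) D') (plugW W t') (Arr M s) (n0 + m')" by blast
    from tApp[OF this h(2)] show "tj (G0 + D + edrop (bW (WAppL W u)) D') (plugW (WAppL W u) t') s (Suc (n0 + n2) + m')"
      by (simp add: ac_simps)
  qed
next
  case (WAppR u W)
  from WAppR.prems obtain G1 M n1 D n2 where h: "tj G1 u (Arr M s) n1" "tjm D (plugW W t) (add_mset Star M) n2"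
    "G = G1 + D" "n = Suc (n1 + n2)" by (auto simp: tj_App_iff)
  have ok: "okh W t" using WAppR.prems by (simp add: okh_def)
  have "decWm W t D (add_mset Star M) n2"
    by (rule decWm_of_decW[OF _ h(2)]) (rule WAppR.IH[OF ok])
  then obtain D0 M0 m G0 n0 where d: "tjm D0 t M0 m" "M0 \<noteq> {#}" "n2 = n0 + m"
    "D = G0 + edrop (bW W) D0"
    "\<forall>D' t' m'. tjm D' t' M0 m' \<longrightarrow> okh W t' \<longrightarrow> tjm (G0 + edrop (bW W) D') (plugW W t') (add_mset Star M) (n0 + m')"
    unfolding decWm_def by auto
  show ?case unfolding decW_def
  proof (intro exI conjI allI impI)
    show "tjm D0 t M0 m" "M0 \<noteq> {#}" by fact+
    show "n = Suc (n1 + n0) + m" using h d by simp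
    show "G = (G1 + G0) + edrop (bW (WAppR u W)) D0" using h d by (simp add: ac_simps)
  next
    fix D' t' m' assume a: "tjm D' t' M0 m'" "okh (WAppR u W) t'"
    then have "okh W t'" by (simp add: okh_def)
    with d(5) a(1) have "tjm (G0 + edrop (bW W) D') (plugW W t') (add_mset Star M) (n0 + m')" by blast
    from tApp[OF h(1) this] show "tj (G1 + G0 + edrop (bW (WAppR u W)) D') (plugW (WAppR u W) t') s (Suc (n1 + n0) + m')"
      by (simp add: ac_simps)
  qed
next
  case (WESR u W)
  from WESR.prems obtain Gb n1 D n2 where h: "tj Gb u s n1" "tjm D (plugW W t) (add_mset Star (Gb 0)) n2"
    "G = etl Gb + D" "n = Suc (n1 + n2)" by (auto simp: tj_ES_iff)
  have ok: "okh W t" using WESR.prems by (simp add: okh_def)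
  have "decWm W t D (add_mset Star (Gb 0)) n2"
    by (rule decWm_of_decW[OF _ h(2)]) (rule WESR.IH[OF ok])
  then obtain D0 M0 m G0 n0 where d: "tjm D0 t M0 m" "M0 \<noteq> {#}" "n2 = n0 + m"
    "D = G0 + edrop (bW W) D0"
    "\<forall>D' t' m'. tjm D' t' M0 m' \<longrightarrow> okh W t' \<longrightarrow> tjm (G0 + edrop (bW W) D') (plugW W t') (add_mset Star (Gb 0)) (n0 + m')"
    unfolding decWm_def by auto
  show ?case unfolding decW_def
  proof (intro exI conjI allI impI)
    show "tjm D0 t M0 m" "M0 \<noteq> {#}" by fact+
    show "n = Suc (n1 + n0) + m" using h d by simp
    show "G = (etl Gb + G0) + edrop (bW (WESR u W)) D0" using h d by (simp add: ac_simps)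
  next
    fix D' t' m' assume a: "tjm D' t' M0 m'" "okh (WESR u W) t'"
    then have "okh W t'" by (simp add: okh_def)
    with d(5) a(1) have "tjm (G0 + edrop (bW W) D') (plugW W t') (add_mset Star (Gb 0)) (n0 + m')" by blast
    from tES[OF h(1) this] show "tj (etl Gb + G0 + edrop (bW (WESR u W)) D') (plugW (WESR u W) t') s (Suc (n1 + n0) + m')"
      by (simp add: ac_simps edrop_def)
  qed
next
  case (WESL W u)
  from WESL.prems obtain Gb n1 D n2 where h: "tj Gb (plugW W t) s n1" "tjm D u (add_mset Star (Gb 0)) n2"
    "G = etl Gb + D" "n = Suc (n1 + n2)" by (auto simp: tj_ES_iff)
  have ok: "okh W t" using WESL.prems by (simp add: okh_def)
  have nf: "bW W \<notin> fv t" using WESL.prems by (simp add: okh_def)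
  from WESL.IH[OF ok h(1)] obtain D0 M0 m G0 n0 where d: "tjm D0 t M0 m" "M0 \<noteq> {#}" "n1 = n0 + m"
    "Gb = G0 + edrop (bW W) D0"
    "\<forall>D' t' m'. tjm D' t' M0 m' \<longrightarrow> okh W t' \<longrightarrow> tj (G0 + edrop (bW W) D') (plugW W t') s (n0 + m')"
    unfolding decW_def by blast
  have z: "D0 (bW W) = {#}" using tjm_supp1[OF d(1) nf] .
  show ?case unfolding decW_def
  proof (intro exI conjI allI impI)
    show "tjm D0 t M0 m" "M0 \<noteq> {#}" by fact+
    show "n = Suc (n0 + n2) + m" using h d by simp
    show "G = (etl G0 + D) + edrop (bW (WESL W u)) D0" using h d by (simp add: etl_edrop ac_simps)
  next
    fix D' t' m' assume a: "tjm D' t' M0 m'" "okh (WESL W u) t'"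
    then have "okh W t'" by (simp add: okh_def)
    with d(5) a(1) have r: "tj (G0 + edrop (bW W) D') (plugW W t') s (n0 + m')" by blast
    have "bW W \<notin> fv t'" using a(2) by (simp add: okh_def)
    then have "D' (bW W) = {#}" using tjm_supp1[OF a(1)] by blast
    then have "(G0 + edrop (bW W) D') 0 = Gb 0" using d(4) z by simp
    with tES[OF r] h(2) have "tj (etl (G0 + edrop (bW W) D') + D) (ES (plugW W t') u) s (Suc (n0 + m' + n2))"
      by simp
    then show "tj (etl G0 + D + edrop (bW (WESL W u)) D') (plugW (WESL W u) t') s (Suc (n0 + n2) + m')"
      by (simp add: etl_edrop ac_simps)
  qed
qed



definition rex :: "trm \<Rightarrow> trm \<Rightarrow> bool" where
  "rex t t' \<longleftrightarrow> (\<forall>G s n. tj G t s n \<longrightarrow> (\<exists>n'. tj G t' s n'))"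

definition rlt :: "trm \<Rightarrow> trm \<Rightarrow> bool" where
  "rlt t t' \<longleftrightarrow> (\<forall>G s n. tj G t s n \<longrightarrow> (\<exists>n'<n. tj G t' s n'))"

lemma rlt_rex: "rlt t t' \<Longrightarrow> rex t t'"
  unfolding rlt_def rex_def by blast

lemma rex_m: "rex t t' \<Longrightarrow> tjm G t M n \<Longrightarrow> \<exists>n'. tjm G t' M n'"
proof (induction M arbitrary: G n)
  case empty then show ?case by (auto simp: tjm_Nil_iff)
next
  case (add s M)
  then obtain G1 G2 n1 n2 where h: "tj G1 t s n1" "tjm G2 t M n2" "G = G1 + G2" by (auto simp: tjm_add_iff)
  from add.prems(1) h(1) obtain n1' where "tj G1 t' s n1'" unfolding rex_def by blast
  moreover from add.IH[OF add.prems(1) h(2)] obtain n2' where "tjm G2 t' M n2'" by blast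
  ultimately show ?case using h(3) by (auto intro: tmCons)
qed

lemma rlt_m: "rlt t t' \<Longrightarrow> tjm G t M n \<Longrightarrow> \<exists>n'\<le>n. tjm G t' M n' \<and> (M \<noteq> {#} \<longrightarrow> n' < n)"
proof (induction M arbitrary: G n)
  case empty then show ?case by (auto simp: tjm_Nil_iff)
next
  case (add s M)
  then obtain G1 G2 n1 n2 where h: "tj G1 t s n1" "tjm G2 t M n2" "G = G1 + G2" "n = n1 + n2" by (auto simp: tjm_add_iff)
  from add.prems(1) h(1) obtain n1' where a: "tj G1 t' s n1'" "n1' < n1" unfolding rlt_def by blast
  moreover from add.IH[OF add.prems(1) h(2)] obtain n2' where "tjm G2 t' M n2'" "n2' \<le> n2" by blast
  ultimately show ?case using h by (auto intro!: exI[of _ "n1' + n2'"] intro: tmCons)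
qed

lemma rex_ctx: "rex t t' \<Longrightarrow> rex (plugC C t) (plugC C t')"
proof (induction C)
  case Hole then show ?case by simp
next
  case (CLam C)
  have ih: "rex (plugC C t) (plugC C t')" using CLam by blast
  show ?case unfolding rex_def
  proof (intro allI impI)
    fix G s n assume "tj G (plugC (CLam C) t) s n"
    then have "tj G (Lam (plugC C t)) s n" by simp
    then consider "G = 0 \<and> s = Star \<and> n = 1" | Gb s' n' where "tj Gb (plugC C t) s' n'" "G = etl Gb" "s = Arr (Gb 0) s'"
      unfolding tj_Lam_iff by blast
    then show "\<exists>n'. tj G (plugC (CLam C) t') s n'"
    proof cases
      case 1 then show ?thesis using tStar' by auto
    next
      case (2 Gb s' n')
      with ih obtain m where "tj Gb (plugC C t') s' m" unfolding rex_def by blast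
      from tLam[OF this] show ?thesis using 2 by auto
    qed
  qed
next
  case (CAppL C u)
  have ih: "rex (plugC C t) (plugC C t')" using CAppL by blast
  show ?case unfolding rex_def
  proof (intro allI impI)
    fix G s n assume "tj G (plugC (CAppL C u) t) s n"
    then obtain G1 M n1 D n2 where h: "tj G1 (plugC C t) (Arr M s) n1" "tjm D u (add_mset Star M) n2" "G = G1 + D"
      by (auto simp: tj_App_iff)
    from ih h(1) obtain m where "tj G1 (plugC C t') (Arr M s) m" unfolding rex_def by blast
    from tApp[OF this h(2)] show "\<exists>n'. tj G (plugC (CAppL C u) t') s n'" using h by auto
  qed
next
  case (CAppR u C)
  have ih: "rex (plugC C t) (plugC C t')" using CAppR by blast
  show ?case unfolding rex_def
  proof (intro allI impI)
    fix G s n assume "tj G (plugC (CAppR u C) t) s n"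
    then obtain G1 M n1 D n2 where h: "tj G1 u (Arr M s) n1" "tjm D (plugC C t) (add_mset Star M) n2" "G = G1 + D"
      by (auto simp: tj_App_iff)
    from rex_m[OF ih h(2)] obtain m where "tjm D (plugC C t') (add_mset Star M) m" by blast
    from tApp[OF h(1) this] show "\<exists>n'. tj G (plugC (CAppR u C) t') s n'" using h by auto
  qed
next
  case (CESL C u)
  have ih: "rex (plugC C t) (plugC C t')" using CESL by blast
  show ?case unfolding rex_def
  proof (intro allI impI)
    fix G s n assume "tj G (plugC (CESL C u) t) s n"
    then obtain Gb n1 D n2 where h: "tj Gb (plugC C t) s n1" "tjm D u (add_mset Star (Gb 0)) n2" "G = etl Gb + D"
      by (auto simp: tj_ES_iff)
    from ih h(1) obtain m where "tj Gb (plugC C t') s m" unfolding rex_def by blast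
    from tES[OF this h(2)] show "\<exists>n'. tj G (plugC (CESL C u) t') s n'" using h by auto
  qed
next
  case (CESR u C)
  have ih: "rex (plugC C t) (plugC C t')" using CESR by blast
  show ?case unfolding rex_def
  proof (intro allI impI)
    fix G s n assume "tj G (plugC (CESR u C) t) s n"
    then obtain Gb n1 D n2 where h: "tj Gb u s n1" "tjm D (plugC C t) (add_mset Star (Gb 0)) n2" "G = etl Gb + D"
      by (auto simp: tj_ES_iff)
    from rex_m[OF ih h(2)] obtain m where "tjm D (plugC C t') (add_mset Star (Gb 0)) m" by blast
    from tES[OF h(1) this] show "\<exists>n'. tj G (plugC (CESR u C) t') s n'" using h by auto
  qed
qed

fun w2c :: "wctx \<Rightarrow> ctx" where
  "w2c WHole = Hole"
| "w2c (WAppL W u) = CAppL (w2c W) u"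
| "w2c (WAppR u W) = CAppR u (w2c W)"
| "w2c (WESR u W) = CESR u (w2c W)"
| "w2c (WESL W u) = CESL (w2c W) u"

lemma plugC_w2c: "plugC (w2c W) t = plugW W t"
  by (induction W) auto

lemma rlt_W: "rlt t t' \<Longrightarrow> rlt (plugW W t) (plugW W t')"
proof (induction W)
  case WHole then show ?case by simp
next
  case (WAppL W u)
  have ih: "rlt (plugW W t) (plugW W t')" using WAppL by blast
  show ?case unfolding rlt_def
  proof (intro allI impI)
    fix G s n assume "tj G (plugW (WAppL W u) t) s n"
    then obtain G1 M n1 D n2 where h: "tj G1 (plugW W t) (Arr M s) n1" "tjm D u (add_mset Star M) n2" "G = G1 + D"
      "n = Suc (n1 + n2)" by (auto simp: tj_App_iff)
    from ih h(1) obtain m where "tj G1 (plugW W t') (Arr M s) m" "m < n1" unfolding rlt_def by blast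
    with tApp[OF this(1) h(2)] show "\<exists>n'<n. tj G (plugW (WAppL W u) t') s n'" using h \<open>m < n1\<close> by (intro exI[of _ "Suc (m + n2)"]) simp
  qed
next
  case (WAppR u W)
  have ih: "rlt (plugW W t) (plugW W t')" using WAppR by blast
  show ?case unfolding rlt_def
  proof (intro allI impI)
    fix G s n assume "tj G (plugW (WAppR u W) t) s n"
    then obtain G1 M n1 D n2 where h: "tj G1 u (Arr M s) n1" "tjm D (plugW W t) (add_mset Star M) n2" "G = G1 + D"
      "n = Suc (n1 + n2)" by (auto simp: tj_App_iff)
    from rlt_m[OF ih h(2)] obtain m where "tjm D (plugW W t') (add_mset Star M) m" "m < n2" by auto
    with tApp[OF h(1) this(1)] show "\<exists>n'<n. tj G (plugW (WAppR u W) t') s n'" using h \<open>m < n2\<close> by (intro exI[of _ "Suc (n1 + m)"]) simp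
  qed
next
  case (WESL W u)
  have ih: "rlt (plugW W t) (plugW W t')" using WESL by blast
  show ?case unfolding rlt_def
  proof (intro allI impI)
    fix G s n assume "tj G (plugW (WESL W u) t) s n"
    then obtain Gb n1 D n2 where h: "tj Gb (plugW W t) s n1" "tjm D u (add_mset Star (Gb 0)) n2" "G = etl Gb + D"
      "n = Suc (n1 + n2)" by (auto simp: tj_ES_iff)
    from ih h(1) obtain m where "tj Gb (plugW W t') s m" "m < n1" unfolding rlt_def by blast
    with tES[OF this(1) h(2)] show "\<exists>n'<n. tj G (plugW (WESL W u) t') s n'" using h \<open>m < n1\<close> by (intro exI[of _ "Suc (m + n2)"]) simp
  qed
next
  case (WESR u W)
  have ih: "rlt (plugW W t) (plugW W t')" using WESR by blast
  show ?case unfolding rlt_def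
  proof (intro allI impI)
    fix G s n assume "tj G (plugW (WESR u W) t) s n"
    then obtain Gb n1 D n2 where h: "tj Gb u s n1" "tjm D (plugW W t) (add_mset Star (Gb 0)) n2" "G = etl Gb + D"
      "n = Suc (n1 + n2)" by (auto simp: tj_ES_iff)
    from rlt_m[OF ih h(2)] obtain m where "tjm D (plugW W t') (add_mset Star (Gb 0)) m" "m < n2" by auto
    with tES[OF h(1) this(1)] show "\<exists>n'<n. tj G (plugW (WESR u W) t') s n'" using h \<open>m < n2\<close> by (intro exI[of _ "Suc (n1 + m)"]) simp
  qed
qed



lemma lift_inj_typ: "tjm D u M n \<Longrightarrow> tjm (renv (\<lambda>x. x + k) D) (lift k u) M n"
  unfolding lift_def by (rule tjm_ren1[OF _ inj_shift])

lemma renv_Suc_shift_low: "i \<le> k \<Longrightarrow> renv (\<lambda>x. Suc (x + k)) D i = {#}"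
  by (auto simp: renv_def)

lemma etl_edrop_renv': "etl (edrop k (renv (\<lambda>x. Suc (x + k)) D)) = D"
  using etl_edrop_renv[of k D] by simp

lemma m_lt: "rlt (App (plugS S (Lam t)) u) (plugS S (ES t (lift (length S) u)))"
  unfolding rlt_def
proof (intro allI impI)
  fix G s n assume "tj G (App (plugS S (Lam t)) u) s n"
  then obtain G1 M n1 D n2 where h: "tj G1 (plugS S (Lam t)) (Arr M s) n1" "tjm D u (add_mset Star M) n2"
    "G = G1 + D" "n = Suc (n1 + n2)" by (auto simp: tj_App_iff)
  let ?k = "length S"
  from spine_decomp[OF h(1)] obtain Gb nb Gs ns where sp: "tj Gb (Lam t) (Arr M s) nb" "G1 = Gs + edrop ?k Gb"
    "n1 = ns + nb" "\<forall>b' Gb' s' nb'. tj Gb' b' s' nb' \<longrightarrow> (\<forall>i<?k. Gb' i = Gb i) \<longrightarrow>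
      tj (Gs + edrop ?k Gb') (plugS S b') s' (ns + nb')" by blast
  from sp(1) obtain Gt nt where l: "tj Gt t s nt" "Gb = etl Gt" "M = Gt 0" "nb = Suc nt"
    by (auto simp: tj_Lam_iff)
  have lu: "tjm (renv (\<lambda>x. x + ?k) D) (lift ?k u) (add_mset Star (Gt 0)) n2"
    using lift_inj_typ[OF h(2)] l by simp
  have b: "tj (etl Gt + renv (\<lambda>x. x + ?k) D) (ES t (lift ?k u)) s (Suc (nt + n2))"
    by (rule tES[OF l(1) lu])
  have ag: "\<forall>i<?k. (etl Gt + renv (\<lambda>x. x + ?k) D) i = Gb i"
    using l(2) by (simp add: renv_shift_low)
  from sp(4) b ag have r: "tj (Gs + edrop ?k (etl Gt + renv (\<lambda>x. x + ?k) D)) (plugS S (ES t (lift ?k u))) s (ns + Suc (nt + n2))"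
    by blast
  have "Gs + edrop ?k (etl Gt + renv (\<lambda>x. x + ?k) D) = G"
    using h(3) sp(2) l(2) by (simp add: edrop_renv_shift ac_simps)
  with r show "\<exists>n'<n. tj G (plugS S (ES t (lift ?k u))) s n'"
    using h(4) sp(3) l(4) by (intro exI[of _ "ns + Suc (nt + n2)"]) simp
qed

lemma m_ex: "rex (plugS S (ES t (lift (length S) u))) (App (plugS S (Lam t)) u)"
  unfolding rex_def
proof (intro allI impI)
  fix G s n assume a: "tj G (plugS S (ES t (lift (length S) u))) s n"
  let ?k = "length S"
  from spine_decomp[OF a] obtain Gb nb Gs ns where sp: "tj Gb (ES t (lift ?k u)) s nb" "G = Gs + edrop ?k Gb"
    "\<forall>b' Gb' s' nb'. tj Gb' b' s' nb' \<longrightarrow> (\<forall>i<?k. Gb' i = Gb i) \<longrightarrow>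
      tj (Gs + edrop ?k Gb') (plugS S b') s' (ns + nb')" by blast
  from sp(1) obtain Gt n1 D' n2 where e: "tj Gt t s n1" "tjm D' (lift ?k u) (add_mset Star (Gt 0)) n2"
    "Gb = etl Gt + D'" by (auto simp: tj_ES_iff)
  from tjm_unren1[OF e(2)[unfolded lift_def] inj_shift] obtain D where d: "tjm D u (add_mset Star (Gt 0)) n2"
    "D' = renv (\<lambda>x. x + ?k) D" by blast
  have ag: "\<forall>i<?k. etl Gt i = Gb i" using e(3) d(2) by (simp add: renv_shift_low)
  from sp(3) tLam[OF e(1)] ag have r: "tj (Gs + edrop ?k (etl Gt)) (plugS S (Lam t)) (Arr (Gt 0) s) (ns + Suc n1)"
    by blast
  from tApp[OF r d(1)] have "tj (Gs + edrop ?k (etl Gt) + D) (App (plugS S (Lam t)) u) s (Suc (ns + Suc n1 + n2))" .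
  moreover have "Gs + edrop ?k (etl Gt) + D = G" using sp(2) e(3) d(2) by (simp add: edrop_renv_shift ac_simps)
  ultimately show "\<exists>n'. tj G (App (plugS S (Lam t)) u) s n'" by auto
qed

lemma okh_Var: "okh W (Var (bW W))"
  by (simp add: okh_def)

lemma okh_lift: "okh W (lift (Suc (bW W)) u)"
  by (auto simp: okh_def fv_lift)

lemma e_lt: "rlt (ES (plugW W (Var (bW W))) u) (ES (plugW W (lift (Suc (bW W)) u)) u)"
  unfolding rlt_def
proof (intro allI impI)
  fix G s n assume a0: "tj G (ES (plugW W (Var (bW W))) u) s n"
  let ?k = "bW W"
  let ?f = "\<lambda>x. x + Suc ?k"
  from a0 obtain Gb n1 Du n2 where h: "tj Gb (plugW W (Var ?k)) s n1" "tjm Du u (add_mset Star (Gb 0)) n2"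
    "G = etl Gb + Du" "n = Suc (n1 + n2)" by (auto simp: tj_ES_iff)
  from decW_all[OF okh_Var h(1)] obtain D M m G0 n0 where d: "tjm D (Var ?k) M m" "M \<noteq> {#}" "n1 = n0 + m"
    "Gb = G0 + edrop ?k D"
    "\<forall>D' t' m'. tjm D' t' M m' \<longrightarrow> okh W t' \<longrightarrow> tj (G0 + edrop ?k D') (plugW W t') s (n0 + m')"
    unfolding decW_def by blast
  from d(1) have dv: "D = senv ?k M" "m = size M" by (auto simp: tjm_Var_iff)
  have g0: "Gb 0 = G0 0 + M" using d(4) dv by (simp add: senv_def)
  from h(2) g0 have "tjm Du u (add_mset Star (G0 0) + M) n2" by simp
  from tjm_union_iff[THEN iffD1, OF this] obtain Da Db na nb where
    sp: "tjm Da u (add_mset Star (G0 0)) na" "tjm Db u M nb" "Du = Da + Db" "n2 = na + nb"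
    by blast
  have lu: "tjm (renv ?f Db) (lift (Suc ?k) u) M nb" by (rule lift_inj_typ[OF sp(2)])
  from d(5) lu okh_lift have r: "tj (G0 + edrop ?k (renv ?f Db)) (plugW W (lift (Suc ?k) u)) s (n0 + nb)" by blast
  have z: "(G0 + edrop ?k (renv ?f Db)) 0 = G0 0" by (simp add: renv_Suc_shift_low)
  from tES[OF r, unfolded z, OF sp(1)]
  have "tj (etl (G0 + edrop ?k (renv ?f Db)) + Da) (ES (plugW W (lift (Suc ?k) u)) u) s (Suc (n0 + nb + na))" .
  moreover have "etl (G0 + edrop ?k (renv ?f Db)) + Da = G"
    using h(3) d(4) dv sp(3) by (simp add: etl_edrop_renv' etl_edrop_senv ac_simps)
  moreover have "Suc (n0 + nb + na) < n" using h(4) d(3) dv d(2) sp(4)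
    by (simp add: nonempty_has_size)
  ultimately show "\<exists>n'<n. tj G (ES (plugW W (lift (Suc ?k) u)) u) s n'" by auto
qed

lemma e_ex: "rex (ES (plugW W (lift (Suc (bW W)) u)) u) (ES (plugW W (Var (bW W))) u)"
  unfolding rex_def
proof (intro allI impI)
  fix G s n assume a0: "tj G (ES (plugW W (lift (Suc (bW W)) u)) u) s n"
  let ?k = "bW W"
  let ?f = "\<lambda>x. x + Suc ?k"
  from a0 obtain Gb n1 Du n2 where h: "tj Gb (plugW W (lift (Suc ?k) u)) s n1" "tjm Du u (add_mset Star (Gb 0)) n2"
    "G = etl Gb + Du" by (auto simp: tj_ES_iff)
  from decW_all[OF okh_lift h(1)] obtain D M m G0 n0 where d: "tjm D (lift (Suc ?k) u) M m"
    "Gb = G0 + edrop ?k D"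
    "\<forall>D' t' m'. tjm D' t' M m' \<longrightarrow> okh W t' \<longrightarrow> tj (G0 + edrop ?k D') (plugW W t') s (n0 + m')"
    unfolding decW_def by blast
  from tjm_unren1[OF d(1)[unfolded lift_def] inj_shift] obtain Db where db: "tjm Db u M m" "D = renv ?f Db" by blast
  have vv: "tjm (senv ?k M) (Var ?k) M (size M)" by (simp add: tjm_Var_iff)
  from d(3) vv okh_Var have r: "tj (G0 + edrop ?k (senv ?k M)) (plugW W (Var ?k)) s (n0 + size M)" by blast
  have z: "(G0 + edrop ?k (senv ?k M)) 0 = G0 0 + M" by (simp add: senv_def)
  have "renv ?f Db ?k = {#}" by (simp add: renv_Suc_shift_low)
  then have gb0: "Gb 0 = G0 0" using d(2) db(2) by simp
  have "tjm (Du + Db) u (add_mset Star (G0 0) + M) (n2 + m)"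
    using h(2) gb0 db(1) by (intro tjm_union_iff[THEN iffD2]) auto
  then have "tjm (Du + Db) u (add_mset Star ((G0 + edrop ?k (senv ?k M)) 0)) (n2 + m)" using z by simp
  from tES[OF r this] have "tj (etl (G0 + edrop ?k (senv ?k M)) + (Du + Db)) (ES (plugW W (Var ?k)) u) s (Suc (n0 + size M + (n2 + m)))" .
  moreover have "etl (G0 + edrop ?k (senv ?k M)) + (Du + Db) = G"
    using h(3) d(2) db(2) by (simp add: etl_edrop_renv' etl_edrop_senv ac_simps)
  ultimately show "\<exists>n'. tj G (ES (plugW W (Var ?k)) u) s n'" by auto
qed

lemma gcv_shapes:
  assumes "0 \<notin> fv t"
  shows "t = ren Suc (ren (\<lambda>n. n - 1) t)" "ren (\<lambda>n. n - 1 + k) t = lift k (ren (\<lambda>n. n - 1) t)"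
proof -
  have "ren Suc (ren (\<lambda>n. n - 1) t) = ren (Suc \<circ> (\<lambda>n. n - 1)) t" by (rule ren_comp)
  also have "\<dots> = ren (\<lambda>x. x) t"
  proof (rule ren_cong)
    fix x assume "x \<in> fv t"
    then have "x \<noteq> 0" using assms by (cases x) auto
    then show "(Suc \<circ> (\<lambda>n. n - 1)) x = x" by simp
  qed
  also have "\<dots> = t" by (rule ren_id')
  finally show "t = ren Suc (ren (\<lambda>n. n - 1) t)" by simp
  have "lift k (ren (\<lambda>n. n - 1) t) = ren ((\<lambda>n. n + k) \<circ> (\<lambda>n. n - 1)) t"
    unfolding lift_def by (rule ren_comp)
  then show "ren (\<lambda>n. n - 1 + k) t = lift k (ren (\<lambda>n. n - 1) t)" by (simp add: comp_def)
qed

lemma gcv_lt: "0 \<notin> fv t \<Longrightarrow> rlt (ES t (plugS S (Lam s))) (plugS S (ren (\<lambda>n. n - 1 + length S) t))"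
  unfolding rlt_def
proof (intro allI impI)
  fix G \<sigma> n assume nf: "0 \<notin> fv t" and a0: "tj G (ES t (plugS S (Lam s))) \<sigma> n"
  let ?k = "length S"
  let ?t0 = "ren (\<lambda>n. n - 1) t"
  from a0 obtain Gt n1 D n2 where h: "tj Gt t \<sigma> n1" "tjm D (plugS S (Lam s)) (add_mset Star (Gt 0)) n2"
    "G = etl Gt + D" "n = Suc (n1 + n2)" by (auto simp: tj_ES_iff)
  have "Gt 0 = {#}" using tj_supp1[OF h(1) nf] .
  with h(2) have "tj D (plugS S (Lam s)) Star n2" by (simp add: tjm_single_iff)
  from spine_decomp[OF this] obtain Gb nb Gs ns where sp: "tj Gb (Lam s) Star nb" "D = Gs + edrop ?k Gb"
    "n2 = ns + nb" "\<forall>b' Gb' s' nb'. tj Gb' b' s' nb' \<longrightarrow> (\<forall>i<?k. Gb' i = Gb i) \<longrightarrow>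
      tj (Gs + edrop ?k Gb') (plugS S b') s' (ns + nb')" by blast
  from sp(1) have gb: "Gb = 0" "nb = Suc 0" by (auto simp: tj_Lam_iff)
  from h(1) gcv_shapes(1)[OF nf] have "tj Gt (ren Suc ?t0) \<sigma> n1" by simp
  from tj_unren1[OF this inj_Suc'] obtain G00 where g: "tj G00 ?t0 \<sigma> n1" "Gt = renv Suc G00" by blast
  have "tj (renv (\<lambda>x. x + ?k) G00) (lift ?k ?t0) \<sigma> n1"
    unfolding lift_def by (rule tj_ren1[OF g(1) inj_shift])
  with sp(4) gb have r: "tj (Gs + edrop ?k (renv (\<lambda>x. x + ?k) G00)) (plugS S (lift ?k ?t0)) \<sigma> (ns + n1)"
    by (simp add: renv_shift_low)
  moreover have "Gs + edrop ?k (renv (\<lambda>x. x + ?k) G00) = G"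
    using h(3) sp(2) gb g(2) by (simp add: edrop_renv_shift etl_renv_Suc ac_simps)
  moreover have "ren (\<lambda>n. n - 1 + ?k) t = lift ?k ?t0" by (rule gcv_shapes(2)[OF nf])
  ultimately show "\<exists>n'<n. tj G (plugS S (ren (\<lambda>n. n - 1 + ?k) t)) \<sigma> n'"
    using h(4) sp(3) gb by (intro exI[of _ "ns + n1"]) simp
qed

lemma gcv_ex: "0 \<notin> fv t \<Longrightarrow> rex (plugS S (ren (\<lambda>n. n - 1 + length S) t)) (ES t (plugS S (Lam s)))"
  unfolding rex_def
proof (intro allI impI)
  fix G \<sigma> n assume nf: "0 \<notin> fv t" and a: "tj G (plugS S (ren (\<lambda>n. n - 1 + length S) t)) \<sigma> n"
  let ?k = "length S"
  let ?t0 = "ren (\<lambda>n. n - 1) t"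
  from a gcv_shapes(2)[OF nf] have "tj G (plugS S (lift ?k ?t0)) \<sigma> n" by simp
  from spine_decomp[OF this] obtain Gb nb Gs ns where sp: "tj Gb (lift ?k ?t0) \<sigma> nb" "G = Gs + edrop ?k Gb"
    "\<forall>b' Gb' s' nb'. tj Gb' b' s' nb' \<longrightarrow> (\<forall>i<?k. Gb' i = Gb i) \<longrightarrow>
      tj (Gs + edrop ?k Gb') (plugS S b') s' (ns + nb')" by blast
  from tj_unren1[OF sp(1)[unfolded lift_def] inj_shift] obtain G00 where g: "tj G00 ?t0 \<sigma> nb"
    "Gb = renv (\<lambda>x. x + ?k) G00" by blast
  have tt: "tj (renv Suc G00) t \<sigma> nb"
    using tj_ren1[OF g(1) inj_Suc'] gcv_shapes(1)[OF nf] by simp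
  have ag: "\<forall>i<?k. (0::env) i = Gb i" using g(2) by (simp add: renv_shift_low)
  from sp(3) tStar' ag have "tj (Gs + edrop ?k 0) (plugS S (Lam s)) Star (ns + Suc 0)" by blast
  then have "tjm Gs (plugS S (Lam s)) (add_mset Star (renv Suc G00 0)) (ns + Suc 0)"
    by (simp add: renv_Suc_0 tjm_single_iff)
  from tES[OF tt this] have "tj (etl (renv Suc G00) + Gs) (ES t (plugS S (Lam s))) \<sigma> (Suc (nb + (ns + Suc 0)))" .
  moreover have "etl (renv Suc G00) + Gs = G" using sp(2) g(2) by (simp add: etl_renv_Suc edrop_renv_shift ac_simps)
  ultimately show "\<exists>n'. tj G (ES t (plugS S (Lam s))) \<sigma> n'" by auto
qed

lemma root_lt_ex: "root t u \<Longrightarrow> rlt t u \<and> rex u t"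
proof (induction rule: root.induct)
  case (rm S t u) show ?case using m_lt m_ex by blast
next
  case (re W u) show ?case using e_lt e_ex by blast
next
  case (rgcv t S s) show ?case using gcv_lt[OF rgcv] gcv_ex[OF rgcv] by blast
qed



lemma wstep_lt_ex: "wstep t u \<Longrightarrow> rlt t u \<and> rex u t"
proof -
  assume "wstep t u"
  then obtain W t0 u0 where h: "t = plugW W t0" "u = plugW W u0" "root t0 u0" unfolding wstep_def by blast
  from root_lt_ex[OF h(3)] have a: "rlt t0 u0" "rex u0 t0" by auto
  have "rlt t u" using rlt_W[OF a(1)] h by simp
  moreover have "rex u t" using rex_ctx[OF a(2), of "w2c W"] h by (simp add: plugC_w2c)
  ultimately show ?thesis by blast
qed

lemma fv_plugW_gen:
  "(\<forall>y\<in>fv t'. m + bW W \<le> y \<longrightarrow> y \<in> fv t \<or> y - (m + bW W) \<in> X) \<Longrightarrow> x \<in> fv (plugW W t') \<Longrightarrow> m \<le> x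
   \<Longrightarrow> x \<in> fv (plugW W t) \<or> x - m \<in> X"
proof (induction W arbitrary: m x)
  case WHole then show ?case by simp
next
  case (WAppL W u)
  show ?case
  proof (cases "x \<in> fv u")
    case True then show ?thesis by simp
  next
    case False
    then have "x \<in> fv (plugW W t')" using WAppL.prems by simp
    from WAppL.IH[of m x, OF _ this] WAppL.prems show ?thesis by auto
  qed
next
  case (WAppR u W)
  show ?case
  proof (cases "x \<in> fv u")
    case True then show ?thesis by simp
  next
    case False
    then have "x \<in> fv (plugW W t')" using WAppR.prems by simp
    from WAppR.IH[of m x, OF _ this] WAppR.prems show ?thesis by auto
  qed
next
  case (WESR u W)
  show ?case
  proof (cases "Suc x \<in> fv u")
    case True then show ?thesis by simp
  next
    case False
    then have "x \<in> fv (plugW W t')" using WESR.prems by simp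
    from WESR.IH[of m x, OF _ this] WESR.prems show ?thesis by auto
  qed
next
  case (WESL W u)
  show ?case
  proof (cases "x \<in> fv u")
    case True then show ?thesis by simp
  next
    case False
    then have a: "Suc x \<in> fv (plugW W t')" using WESL.prems by simp
    have h: "\<forall>y\<in>fv t'. Suc m + bW W \<le> y \<longrightarrow> y \<in> fv t \<or> y - (Suc m + bW W) \<in> X"
      using WESL.prems(1) by simp
    from WESL.IH[of "Suc m" "Suc x", OF h a] WESL.prems(3) show ?thesis by auto
  qed
qed

lemma root_fv: "root t u \<Longrightarrow> fv u \<subseteq> fv t"
proof (induction rule: root.induct)
  case (rm S t u)
  show ?case
  proof
    fix x assume "x \<in> fv (plugS S (ES t (lift (length S) u)))"
    then have x: "x \<in> fv (plugW (sW S) (ES t (lift (length S) u)))" by (simp add: plugS_sW)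
    have "\<forall>y\<in>fv (ES t (lift (length S) u)). 0 + bW (sW S) \<le> y \<longrightarrow> y \<in> fv (Lam t) \<or> y - (0 + bW (sW S)) \<in> fv u"
      by (auto simp: fv_lift)
    from fv_plugW_gen[OF this x] show "x \<in> fv (App (plugS S (Lam t)) u)" by (auto simp: plugS_sW)
  qed
next
  case (re W u)
  show ?case
  proof
    fix x assume "x \<in> fv (ES (plugW W (lift (Suc (bW W)) u)) u)"
    then consider "x \<in> fv u" | "Suc x \<in> fv (plugW W (lift (Suc (bW W)) u))" by auto
    then show "x \<in> fv (ES (plugW W (Var (bW W))) u)"
    proof cases
      case 1 then show ?thesis by simp
    next
      case 2
      have "\<forall>y\<in>fv (lift (Suc (bW W)) u). 1 + bW W \<le> y \<longrightarrow> y \<in> fv (Var (bW W)) \<or> y - (1 + bW W) \<in> fv u"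
        by (auto simp: fv_lift)
      from fv_plugW_gen[OF this 2] show ?thesis by simp
    qed
  qed
next
  case (rgcv t S s)
  show ?case
  proof
    fix x assume "x \<in> fv (plugS S (ren (\<lambda>n. n - 1 + length S) t))"
    then have x: "x \<in> fv (plugW (sW S) (ren (\<lambda>n. n - 1 + length S) t))" by (simp add: plugS_sW)
    have "\<forall>y\<in>fv (ren (\<lambda>n. n - 1 + length S) t). 0 + bW (sW S) \<le> y \<longrightarrow> y \<in> fv (Lam s) \<or> y - (0 + bW (sW S)) \<in> {n. Suc n \<in> fv t}"
    proof (intro ballI impI)
      fix y assume "y \<in> fv (ren (\<lambda>n. n - 1 + length S) t)"
      then obtain z where z: "z \<in> fv t" "y = z - 1 + length S" by (auto simp: fv_ren)
      have "z \<noteq> 0"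
      proof
        assume "z = 0" with z(1) rgcv show False by simp
      qed
      then show "y \<in> fv (Lam s) \<or> y - (0 + bW (sW S)) \<in> {n. Suc n \<in> fv t}" using z by simp
    qed
    from fv_plugW_gen[OF this x] show "x \<in> fv (ES t (plugS S (Lam s)))" by (auto simp: plugS_sW)
  qed
qed

lemma wstep_fv: "wstep t u \<Longrightarrow> fv u \<subseteq> fv t"
proof -
  assume "wstep t u"
  then obtain W t0 u0 where h: "t = plugW W t0" "u = plugW W u0" "root t0 u0" unfolding wstep_def by blast
  have "\<forall>y\<in>fv u0. 0 + bW W \<le> y \<longrightarrow> y \<in> fv t0 \<or> y - (0 + bW W) \<in> {}" using root_fv[OF h(3)] by auto
  from fv_plugW_gen[OF this] h show ?thesis by auto
qed

lemma wsteps_fv: "wstep\<^sup>*\<^sup>* t u \<Longrightarrow> fv u \<subseteq> fv t"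
  by (induction rule: rtranclp_induct) (auto dest: wstep_fv)

fun wv :: "trm \<Rightarrow> nat set" where
  "wv (Var n) = {n}"
| "wv (Lam t) = {}"
| "wv (App t u) = wv t \<union> wv u"
| "wv (ES t u) = {n. Suc n \<in> wv t} \<union> wv u"

lemma wv_fv: "wv t \<subseteq> fv t"
  by (induction t) auto

lemma wv_W: "k \<in> wv t \<Longrightarrow> \<exists>W. t = plugW W (Var (k + bW W))"
proof (induction t arbitrary: k)
  case (Var n) then show ?case by (auto intro: exI[of _ WHole])
next
  case (Lam t) then show ?case by simp
next
  case (App t u)
  then consider "k \<in> wv t" | "k \<in> wv u" by auto
  then show ?case
  proof cases
    case 1 then obtain W where "t = plugW W (Var (k + bW W))" using App.IH(1) by blast
    then show ?thesis by (intro exI[of _ "WAppL W u"]) simp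
  next
    case 2 then obtain W where "u = plugW W (Var (k + bW W))" using App.IH(2) by blast
    then show ?thesis by (intro exI[of _ "WAppR t W"]) simp
  qed
next
  case (ES t u)
  then consider "Suc k \<in> wv t" | "k \<in> wv u" by auto
  then show ?case
  proof cases
    case 1 then obtain W where "t = plugW W (Var (Suc k + bW W))" using ES.IH(1) by blast
    then show ?thesis by (intro exI[of _ "WESL W u"]) simp
  next
    case 2 then obtain W where "u = plugW W (Var (k + bW W))" using ES.IH(2) by blast
    then show ?thesis by (intro exI[of _ "WESR t W"]) simp
  qed
qed

lemma root_wstep: "root a b \<Longrightarrow> wstep a b"
  unfolding wstep_def by (intro exI[of _ WHole]) auto

lemma wstep_AppL: "wstep a a' \<Longrightarrow> wstep (App a b) (App a' b)"
proof -
  assume "wstep a a'"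
  then obtain W t0 u0 where h: "a = plugW W t0" "a' = plugW W u0" "root t0 u0" unfolding wstep_def by blast
  then show ?thesis unfolding wstep_def by (intro exI[of _ "WAppL W b"] exI[of _ t0] exI[of _ u0]) simp
qed
lemma wstep_AppR: "wstep a a' \<Longrightarrow> wstep (App b a) (App b a')"
proof -
  assume "wstep a a'"
  then obtain W t0 u0 where h: "a = plugW W t0" "a' = plugW W u0" "root t0 u0" unfolding wstep_def by blast
  then show ?thesis unfolding wstep_def by (intro exI[of _ "WAppR b W"] exI[of _ t0] exI[of _ u0]) simp
qed
lemma wstep_ESL: "wstep a a' \<Longrightarrow> wstep (ES a b) (ES a' b)"
proof -
  assume "wstep a a'"
  then obtain W t0 u0 where h: "a = plugW W t0" "a' = plugW W u0" "root t0 u0" unfolding wstep_def by blast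
  then show ?thesis unfolding wstep_def by (intro exI[of _ "WESL W b"] exI[of _ t0] exI[of _ u0]) simp
qed
lemma wstep_ESR: "wstep a a' \<Longrightarrow> wstep (ES b a) (ES b a')"
proof -
  assume "wstep a a'"
  then obtain W t0 u0 where h: "a = plugW W t0" "a' = plugW W u0" "root t0 u0" unfolding wstep_def by blast
  then show ?thesis unfolding wstep_def by (intro exI[of _ "WESR b W"] exI[of _ t0] exI[of _ u0]) simp
qed

definition nf :: "trm \<Rightarrow> bool" where
  "nf t \<longleftrightarrow> \<not> (\<exists>u. wstep t u)"

lemma nf_typ: "nf t \<Longrightarrow> wv t = {} \<Longrightarrow> (\<exists>S s. t = plugS S (Lam s)) \<and> (\<exists>n. tj 0 t Star n)"
proof (induction t)
  case (Var n) then show ?case by simp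
next
  case (Lam t)
  have "Lam t = plugS [] (Lam t)" by simp
  then show ?case using tStar' by blast
next
  case (App h u)
  have "nf h" using App.prems(1) unfolding nf_def by (auto dest: wstep_AppL)
  moreover have "wv h = {}" using App.prems(2) by simp
  ultimately obtain S s where "h = plugS S (Lam s)" using App.IH(1) by blast
  then have "root (App h u) (plugS S (ES s (lift (length S) u)))" by (simp add: root.rm)
  then have False using App.prems(1) unfolding nf_def by (auto dest: root_wstep)
  then show ?case ..
next
  case (ES a b)
  have na: "nf a" using ES.prems(1) unfolding nf_def by (auto dest: wstep_ESL)
  have nb: "nf b" using ES.prems(1) unfolding nf_def by (auto dest: wstep_ESR)
  have wb: "wv b = {}" using ES.prems(2) by simp
  have z: "0 \<notin> wv a"
  proof
    assume "0 \<in> wv a"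
    then obtain W where "a = plugW W (Var (bW W))" using wv_W[of 0 a] by auto
    then have "root (ES a b) (ES (plugW W (lift (Suc (bW W)) b)) b)" by (simp add: root.re)
    then show False using ES.prems(1) unfolding nf_def by (auto dest: root_wstep)
  qed
  have wa: "wv a = {}"
  proof (rule ccontr)
    assume "wv a \<noteq> {}"
    then obtain y where y: "y \<in> wv a" by auto
    with z obtain m where "y = Suc m" by (cases y) auto
    then have "m \<in> wv (ES a b)" using y by simp
    then show False using ES.prems(2) by simp
  qed
  from ES.IH(1)[OF na wa] obtain S s na' where a: "a = plugS S (Lam s)" "tj 0 a Star na'" by blast
  from ES.IH(2)[OF nb wb] obtain nb' where b: "tj 0 b Star nb'" by blast
  have "tjm 0 b (add_mset Star ((0::env) 0)) nb'" using b by (simp add: tjm_single_iff)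
  from tES[OF a(2) this] have "tj 0 (ES a b) Star (Suc (na' + nb'))" by simp
  moreover have "ES a b = plugS (b # S) (Lam s)" using a by simp
  ultimately show ?case by blast
qed

lemma typ_wnorm: "tj G t s n \<Longrightarrow> wnorm t"
proof (induction n arbitrary: t rule: less_induct)
  case (less n)
  show ?case
  proof (cases "\<exists>u. wstep t u")
    case True
    then obtain u where u: "wstep t u" by blast
    from wstep_lt_ex[OF u] less.prems obtain n' where "n' < n" "tj G u s n'" unfolding rlt_def by blast
    with less.IH have "wnorm u" by blast
    then obtain v where "wstep\<^sup>*\<^sup>* u v" "\<not> (\<exists>u'. wstep v u')" unfolding wnorm_def by blast
    then show ?thesis unfolding wnorm_def using u by (meson converse_rtranclp_into_rtranclp)
  next
    case False then show ?thesis unfolding wnorm_def by blast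
  qed
qed

lemma wsteps_typ_back: "wstep\<^sup>*\<^sup>* t v \<Longrightarrow> (\<exists>G s n. tj G v s n) \<Longrightarrow> (\<exists>G s n. tj G t s n)"
proof (induction rule: converse_rtranclp_induct)
  case base then show ?case .
next
  case (step y z)
  from step.IH step.prems obtain G s n where "tj G z s n" by blast
  with wstep_lt_ex[OF step.hyps(1)] show ?case unfolding rex_def by blast
qed

lemma wnorm_typ: "closed t \<Longrightarrow> wnorm t \<Longrightarrow> \<exists>G s n. tj G t s n"
proof -
  assume c: "closed t" and w: "wnorm t"
  then obtain v where v: "wstep\<^sup>*\<^sup>* t v" "\<not> (\<exists>u'. wstep v u')" unfolding wnorm_def by blast
  have "fv v = {}" using wsteps_fv[OF v(1)] c unfolding closed_def by auto
  then have "wv v = {}" using wv_fv[of v] by auto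
  with nf_typ[of v] v(2) obtain n where "tj 0 v Star n" unfolding nf_def by blast
  then show ?thesis using wsteps_typ_back[OF v(1)] by blast
qed

lemma wnorm_iff_typ: "closed t \<Longrightarrow> wnorm t \<longleftrightarrow> (\<exists>G s n. tj G t s n)"
  using wnorm_typ typ_wnorm by blast

fun ccomp :: "ctx \<Rightarrow> ctx \<Rightarrow> ctx" where
  "ccomp Hole D = D"
| "ccomp (CLam C) D = CLam (ccomp C D)"
| "ccomp (CAppL C u) D = CAppL (ccomp C D) u"
| "ccomp (CAppR u C) D = CAppR u (ccomp C D)"
| "ccomp (CESL C u) D = CESL (ccomp C D) u"
| "ccomp (CESR u C) D = CESR u (ccomp C D)"

lemma plugC_ccomp: "plugC (ccomp C D) t = plugC C (plugC D t)"
  by (induction C) auto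

theorem proposition7p8:
  shows "(\<forall>t u. wstep t u \<longrightarrow> ctxeq t u)
       \<and> (\<forall>t u C. ctxeq t u \<longrightarrow> ctxeq (plugC C t) (plugC C u))"
proof (intro conjI allI impI)
  fix t u assume st: "wstep t u"
  from wstep_lt_ex[OF st] have e1: "rex t u" "rex u t" using rlt_rex by blast+
  show "ctxeq t u" unfolding ctxeq_def
  proof (intro allI impI)
    fix C assume c: "closed (plugC C t) \<and> closed (plugC C u)"
    have r1: "rex (plugC C t) (plugC C u)" by (rule rex_ctx[OF e1(1)])
    have r2: "rex (plugC C u) (plugC C t)" by (rule rex_ctx[OF e1(2)])
    show "wnorm (plugC C t) \<longleftrightarrow> wnorm (plugC C u)"
      using wnorm_iff_typ[of "plugC C t"] wnorm_iff_typ[of "plugC C u"] c r1 r2 unfolding rex_def by blast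
  qed
next
  fix t u C assume h: "ctxeq t u"
  show "ctxeq (plugC C t) (plugC C u)" unfolding ctxeq_def
  proof (intro allI impI)
    fix D assume "closed (plugC D (plugC C t)) \<and> closed (plugC D (plugC C u))"
    then have "closed (plugC (ccomp D C) t) \<and> closed (plugC (ccomp D C) u)" by (simp add: plugC_ccomp)
    with h have "wnorm (plugC (ccomp D C) t) \<longleftrightarrow> wnorm (plugC (ccomp D C) u)" unfolding ctxeq_def by blast
    then show "wnorm (plugC D (plugC C t)) \<longleftrightarrow> wnorm (plugC D (plugC C u))" by (simp add: plugC_ccomp)
  qed
qed

end
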